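(* There exists an absolute constant $c_0>0$ such that for every centered log-concave probability measure $\mu$ on $\mathbb{R}^n$ and every $t\geq 5n$, $$R_t(\mu)\supseteq c_0K_{n+1}(\mu).$$
   Context: A log-concave probability measure on $\mathbb{R}^n$ is a Borel probability measure with $\mu(\lambda A+(1-\lambda)B)\geq\mu(A)^\lambda\mu(B)^{1-\lambda}$ for compact $A,B$, $\lambda\in(0,1)$, and $\mu(H)<1$ for every hyperplane $H$; it has a log-concave density $f_\mu$. Centered means barycenter at $0$. $R_t(\mu)=\{x\in\mathbb{R}^n: f_\mu(x)\geq e^{-t}f_\mu(0)\}$. For $s>0$, $K_s(\mu)=\{x\in\mathbb{R}^n: \int_0^\infty r^{s-1}f_\mu(rx)\,dr\geq f_\mu(0)/s\}$ (Ball's body). *)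

theory Defs
  imports "HOL-Probability.Probability"
begin

text \<open>Points of R^n are represented as extensional functions in
  PiE {..<n} (\<lambda>_. UNIV) (coordinates 0..n-1), so that the dimension n is
  an ordinary variable and can be quantified inside the statement.\<close>

definition Rn :: "nat \<Rightarrow> (nat \<Rightarrow> real) set" where
  "Rn n = PiE {..<n} (\<lambda>_. UNIV)"

definition lebn :: "nat \<Rightarrow> (nat \<Rightarrow> real) measure" where
  "lebn n = PiM {..<n} (\<lambda>_. lborel)"

definition vzero :: "nat \<Rightarrow> nat \<Rightarrow> real" where
  "vzero n = (\<lambda>i\<in>{..<n}. 0)"

definition vscale :: "nat \<Rightarrow> real \<Rightarrow> (nat \<Rightarrow> real) \<Rightarrow> nat \<Rightarrow> real" where
  "vscale n r x = (\<lambda>i\<in>{..<n}. r * x i)"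

definition vcomb :: "nat \<Rightarrow> real \<Rightarrow> (nat \<Rightarrow> real) \<Rightarrow> real \<Rightarrow> (nat \<Rightarrow> real) \<Rightarrow> nat \<Rightarrow> real" where
  "vcomb n a x b y = (\<lambda>i\<in>{..<n}. a * x i + b * y i)"

definition hyperplane_n :: "nat \<Rightarrow> (nat \<Rightarrow> real) set \<Rightarrow> bool" where
  "hyperplane_n n H \<longleftrightarrow> (\<exists>u c. (\<exists>i<n. u i \<noteq> 0) \<and>
      H = {x \<in> Rn n. (\<Sum>i<n. u i * x i) = c})"

definition log_concave_measure :: "nat \<Rightarrow> (nat \<Rightarrow> real) measure \<Rightarrow> bool" where
  "log_concave_measure n M \<longleftrightarrow>
     sets M = sets (lebn n) \<and> prob_space M \<and>
     (\<forall>A B l. A \<subseteq> Rn n \<and> B \<subseteq> Rn n \<and> compact A \<and> compact B \<and> 0 < l \<and> l < 1 \<longrightarrow>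
        measure M {vcomb n l a (1 - l) b | a b. a \<in> A \<and> b \<in> B}
          \<ge> measure M A powr l * measure M B powr (1 - l)) \<and>
     (\<forall>H. hyperplane_n n H \<longrightarrow> measure M H < 1)"

definition centered :: "nat \<Rightarrow> (nat \<Rightarrow> real) measure \<Rightarrow> bool" where
  "centered n M \<longleftrightarrow> (\<forall>i<n. integrable M (\<lambda>x. x i) \<and> (\<integral>x. x i \<partial>M) = 0)"

definition log_concave_fun :: "nat \<Rightarrow> ((nat \<Rightarrow> real) \<Rightarrow> real) \<Rightarrow> bool" where
  "log_concave_fun n f \<longleftrightarrow> (\<forall>x\<in>Rn n. 0 \<le> f x) \<and>
     (\<forall>x\<in>Rn n. \<forall>y\<in>Rn n. \<forall>l. 0 < l \<and> l < 1 \<longrightarrow>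
        f (vcomb n l x (1 - l) y) \<ge> f x powr l * f y powr (1 - l))"

definition is_lc_density :: "nat \<Rightarrow> (nat \<Rightarrow> real) measure \<Rightarrow> ((nat \<Rightarrow> real) \<Rightarrow> real) \<Rightarrow> bool" where
  "is_lc_density n M f \<longleftrightarrow> f \<in> borel_measurable (lebn n) \<and> log_concave_fun n f \<and>
     M = density (lebn n) (\<lambda>x. ennreal (f x))"

definition Rt :: "nat \<Rightarrow> ((nat \<Rightarrow> real) \<Rightarrow> real) \<Rightarrow> real \<Rightarrow> (nat \<Rightarrow> real) set" where
  "Rt n f t = {x \<in> Rn n. f x \<ge> exp (- t) * f (vzero n)}"

definition Ks :: "nat \<Rightarrow> ((nat \<Rightarrow> real) \<Rightarrow> real) \<Rightarrow> real \<Rightarrow> (nat \<Rightarrow> real) set" where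
  "Ks n f s = {x \<in> Rn n.
     (\<integral>\<^sup>+ r. ennreal (indicator {0<..} r * r powr (s - 1) * f (vscale n r x)) \<partial>lborel)
       \<ge> ennreal (f (vzero n) / s)}"

end

theory Submission
  imports Defs "HOL-Probability.Distributions"
begin


lemma lebn_Suc: "lebn (Suc n) = PiM (insert n {..<n}) (\<lambda>_. lborel)"
  by (simp add: lebn_def lessThan_Suc)

lemma lebn_affine:
  fixes c :: real
  assumes c: "c > 0"
  shows "g \<in> borel_measurable (lebn n) \<Longrightarrow>
    (\<integral>\<^sup>+z. g (\<lambda>i\<in>{..<n}. c * z i + d i) \<partial>lebn n) = ennreal (1 / c^n) * (\<integral>\<^sup>+z. g z \<partial>lebn n)"
proof (induction n arbitrary: g)
  case 0
  have "(\<lambda>i\<in>{..<0::nat}. c * z i + d i) = z" if "z \<in> space (lebn 0)" for z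
    using that by (auto simp: lebn_def space_PiM)
  then have "(\<integral>\<^sup>+z. g (\<lambda>i\<in>{..<0::nat}. c * z i + d i) \<partial>lebn 0) = (\<integral>\<^sup>+z. g z \<partial>lebn 0)"
    by (intro nn_integral_cong) (simp only:)
  then show ?case by (metis div_by_1 ennreal_1 mult_1 power_0)
next
  case (Suc n)
  interpret product_sigma_finite "\<lambda>_::nat. lborel::real measure" by standard
  have gm[measurable]: "g \<in> borel_measurable (PiM (insert n {..<n}) (\<lambda>_. lborel))"
    using Suc.prems by (simp add: lebn_Suc)
  define T where "T = (\<lambda>z::nat\<Rightarrow>real. \<lambda>i\<in>{..<n}. c * z i + d i)"
  have Tm[measurable]: "T \<in> measurable (PiM {..<n} (\<lambda>_. lborel)) (PiM {..<n} (\<lambda>_. lborel))"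
    unfolding T_def by measurable
  have eq: "(\<lambda>i\<in>{..<Suc n}. c * (x(n:=y)) i + d i) = (T x)(n := c * y + d n)"
    if "x \<in> space (PiM {..<n} (\<lambda>_. lborel))" for x y
    using that by (auto simp: T_def fun_eq_iff space_PiM)
  have T1m: "(\<lambda>z. \<lambda>i\<in>{..<Suc n}. c * z i + d i) \<in> measurable (PiM (insert n {..<n}) (\<lambda>_. lborel::real measure)) (PiM (insert n {..<n}) (\<lambda>_. lborel))"
    unfolding lessThan_Suc by measurable
  have gT1m: "(\<lambda>z. g (\<lambda>i\<in>{..<Suc n}. c * z i + d i)) \<in> borel_measurable (PiM (insert n {..<n}) (\<lambda>_. lborel))"
    using measurable_comp[OF T1m gm] by (simp add: comp_def)
  define G where "G = (\<lambda>w. \<integral>\<^sup>+y. g (w(n:=y)) \<partial>lborel)"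
  have Gm: "G \<in> borel_measurable (lebn n)"
    unfolding G_def lebn_def by measurable
  have "(\<integral>\<^sup>+z. g (\<lambda>i\<in>{..<Suc n}. c * z i + d i) \<partial>lebn (Suc n))
      = (\<integral>\<^sup>+x. (\<integral>\<^sup>+y. g (\<lambda>i\<in>{..<Suc n}. c * (x(n:=y)) i + d i) \<partial>lborel) \<partial>lebn n)"
    unfolding lebn_Suc by (subst product_nn_integral_insert[OF _ _ gT1m]) (auto simp: lebn_def)
  also have "\<dots> = (\<integral>\<^sup>+x. (\<integral>\<^sup>+y. g ((T x)(n := d n + c * y)) \<partial>lborel) \<partial>lebn n)"
    by (intro nn_integral_cong) (metis eq lebn_def add.commute)
  also have "\<dots> = (\<integral>\<^sup>+x. ennreal (1/c) * G (T x) \<partial>lebn n)"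
  proof (intro nn_integral_cong)
    fix x assume x: "x \<in> space (lebn n)"
    have "T x \<in> space (PiM {..<n} (\<lambda>_. lborel))"
      by (simp add: T_def space_PiM)
    then have m: "(\<lambda>y. g ((T x)(n := y))) \<in> borel_measurable borel"
      using measurable_comp[OF measurable_component_update gm] by (auto simp: comp_def)
    have "G (T x) = ennreal c * (\<integral>\<^sup>+y. g ((T x)(n := d n + c * y)) \<partial>lborel)"
      unfolding G_def using nn_integral_real_affine[OF m, of c "d n"] c by simp
    then show "(\<integral>\<^sup>+y. g ((T x)(n := d n + c * y)) \<partial>lborel) = ennreal (1/c) * G (T x)"
      using c by (simp add: ennreal_mult'[symmetric] mult.assoc[symmetric])
  qed
  also have "\<dots> = ennreal (1/c) * (\<integral>\<^sup>+x. G (T x) \<partial>lebn n)"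
    using Gm Tm by (subst nn_integral_cmult) (auto simp: lebn_def)
  also have "(\<integral>\<^sup>+x. G (T x) \<partial>lebn n) = ennreal (1 / c^n) * (\<integral>\<^sup>+z. G z \<partial>lebn n)"
    using Suc.IH[OF Gm] unfolding T_def .
  also have "(\<integral>\<^sup>+z. G z \<partial>lebn n) = (\<integral>\<^sup>+z. g z \<partial>lebn (Suc n))"
    unfolding lebn_Suc G_def by (subst product_nn_integral_insert) (auto simp: lebn_def)
  finally show ?case using c
    by (simp add: ennreal_mult'[symmetric] mult.assoc[symmetric])
qed



lemma HB_step_key:
  fixes u s t1 t2 La Lb Lm :: real
  assumes "s > 0" "u > 0" "Lm = (u/(u+s)) * La + (1 - u/(u+s)) * Lb"
    "(u/(u+s)) * t1 + (1 - u/(u+s)) * t2 \<le> Lm"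
  shows "(t1 - La) / s \<le> (Lb - t2) / u"
proof -
  have "1 - u/(u+s) = s/(u+s)" using assms by (simp add: field_simps)
  then have "(u/(u+s)) * t1 + (s/(u+s)) * t2 \<le> (u/(u+s)) * La + (s/(u+s)) * Lb"
    using assms by simp
  then have "(u * t1 + s * t2)/(u+s) \<le> (u*La + s*Lb)/(u+s)"
    by (simp add: add_divide_distrib)
  then have "u * t1 + s * t2 \<le> u * La + s * Lb"
    using assms by (simp add: divide_le_cancel)
  then have "u * (t1 - La) \<le> s * (Lb - t2)" by (simp add: algebra_simps)
  then show ?thesis using assms by (simp add: field_simps mult.commute)
qed

lemma HB_supergradient:
  fixes E :: "((nat \<Rightarrow> real) \<times> real) set" and n :: nat
  assumes sub: "\<And>w t. (w,t)\<in>E \<Longrightarrow> w \<in> Rn n"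
    and conv: "\<And>a t b s l. (a,t)\<in>E \<Longrightarrow> (b,s)\<in>E \<Longrightarrow> 0<l \<Longrightarrow> l<1 \<Longrightarrow>
       (vcomb n l a (1-l) b, l*t + (1-l) * s) \<in> E"
    and fib0: "\<And>w t. (w,t)\<in>E \<Longrightarrow> (\<forall>i<n. w i = 0) \<Longrightarrow> t \<le> 0"
    and pos: "\<And>k. k<n \<Longrightarrow> \<exists>a t. (a,t)\<in>E \<and> a k > 0 \<and> (\<forall>i. k<i \<and> i<n \<longrightarrow> a i = 0)"
    and neg: "\<And>k. k<n \<Longrightarrow> \<exists>a t. (a,t)\<in>E \<and> a k < 0 \<and> (\<forall>i. k<i \<and> i<n \<longrightarrow> a i = 0)"
  shows "\<exists>v. \<forall>w t. (w,t)\<in>E \<longrightarrow> t \<le> (\<Sum>i<n. v i * w i)"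
proof -
  have "k \<le> n \<Longrightarrow> \<exists>v. \<forall>w t. (w,t)\<in>E \<and> (\<forall>i. k\<le>i \<and> i<n \<longrightarrow> w i = 0) \<longrightarrow> t \<le> (\<Sum>i<k. v i * w i)" for k
  proof (induction k)
    case 0
    then show ?case using fib0 by auto
  next
    case (Suc k)
    then have kn: "k < n" by simp
    from Suc obtain v where v: "\<And>w t. (w,t)\<in>E \<Longrightarrow> (\<forall>i. k\<le>i \<and> i<n \<longrightarrow> w i = 0) \<Longrightarrow> t \<le> (\<Sum>i<k. v i * w i)"
      by auto
    define L where "L = (\<lambda>w::nat\<Rightarrow>real. \<Sum>i<k. v i * w i)"
    define E' where "E' = {(w,t). (w,t)\<in>E \<and> (\<forall>i. Suc k\<le>i \<and> i<n \<longrightarrow> w i = 0)}"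
    define A where "A = {(t - L a) / a k | a t. (a,t) \<in> E' \<and> a k > 0}"
    define B where "B = {(L b - t) / (- b k) | b t. (b,t) \<in> E' \<and> b k < 0}"
    have key: "\<alpha> \<le> \<beta>" if hA: "\<alpha> \<in> A" and hB: "\<beta> \<in> B" for \<alpha> \<beta>
    proof -
      obtain a t1 where a: "(a,t1)\<in>E'" "a k > 0" "\<alpha> = (t1 - L a) / a k"
        using hA unfolding A_def by blast
      obtain b t2 where b: "(b,t2)\<in>E'" "b k < 0" "\<beta> = (L b - t2) / (- b k)"
        using hB unfolding B_def by blast
      define s where "s = a k"
      define u where "u = - b k"
      have su: "s > 0" "u > 0" using a b by (auto simp: s_def u_def)
      define l where "l = u/(u+s)"
      have l: "0 < l" "l < 1" using su by (auto simp: l_def field_simps)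
      define m where "m = vcomb n l a (1-l) b"
      have aE: "(a,t1)\<in>E" and bE: "(b,t2)\<in>E" using a b by (auto simp: E'_def)
      have mE: "(m, l*t1 + (1-l)*t2) \<in> E" unfolding m_def using conv[OF aE bE l] .
      have "1 - l = s/(u+s)" using su by (simp add: l_def field_simps)
      then have mk: "m k = 0" using kn su by (simp add: m_def vcomb_def l_def s_def u_def field_simps)
      have "\<forall>i. k\<le>i \<and> i<n \<longrightarrow> m i = 0"
      proof (intro allI impI)
        fix i assume i: "k\<le>i \<and> i<n"
        show "m i = 0"
        proof (cases "i = k")
          case True then show ?thesis using mk by simp
        next
          case False
          then have "Suc k \<le> i" using i by simp
          then have "a i = 0" "b i = 0" using a b i by (auto simp: E'_def)
          then show ?thesis using i by (simp add: m_def vcomb_def)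
        qed
      qed
      then have tm: "l*t1 + (1-l)*t2 \<le> L m" using v[OF mE] by (simp add: L_def)
      have "L m = l * L a + (1-l) * L b"
        using kn by (simp add: L_def m_def vcomb_def sum_distrib_left sum.distrib[symmetric] algebra_simps)
      then show ?thesis using HB_step_key[OF su, of "L m" "L a" "L b" t1 t2] tm
        by (simp add: a b s_def u_def l_def)
    qed
    obtain a0 t0 where a0: "(a0,t0)\<in>E" "a0 k > 0" "\<forall>i. k<i \<and> i<n \<longrightarrow> a0 i = 0"
      using pos[OF kn] by auto
    obtain b0 s0 where b0: "(b0,s0)\<in>E" "b0 k < 0" "\<forall>i. k<i \<and> i<n \<longrightarrow> b0 i = 0"
      using neg[OF kn] by auto
    have Ane: "A \<noteq> {}" using a0 unfolding A_def E'_def by auto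
    have Bne: "(L b0 - s0) / (- b0 k) \<in> B" unfolding B_def E'_def
      apply (rule CollectI) apply (rule exI[of _ b0], rule exI[of _ s0]) using b0 by auto
    have bddA: "bdd_above A" using key[OF _ Bne] by (rule bdd_aboveI)
    define c where "c = Sup A"
    have cA: "\<alpha> \<le> c" if "\<alpha> \<in> A" for \<alpha> using bddA that unfolding c_def by (simp add: cSup_upper)
    have cB: "c \<le> \<beta>" if "\<beta> \<in> B" for \<beta> using Ane key that unfolding c_def by (simp add: cSup_least)
    define v' where "v' = v(k := c)"
    show ?case
    proof (intro exI allI impI, elim conjE)
      fix w t assume wt: "(w,t)\<in>E" and z: "\<forall>i. Suc k\<le>i \<and> i<n \<longrightarrow> w i = 0"
      have wE': "(w,t) \<in> E'" using wt z by (simp add: E'_def)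
      have sum: "(\<Sum>i<Suc k. v' i * w i) = L w + c * w k"
        by (simp add: v'_def L_def)
      consider "w k > 0" | "w k < 0" | "w k = 0" by linarith
      then show "t \<le> (\<Sum>i<Suc k. v' i * w i)"
      proof cases
        case 1
        then have "(t - L w) / w k \<le> c" using cA wE' unfolding A_def by blast
        then show ?thesis unfolding sum using 1 by (simp add: field_simps)
      next
        case 2
        then have "c \<le> (L w - t) / (- w k)" using cB wE' unfolding B_def by blast
        then show ?thesis unfolding sum using 2 by (simp add: field_simps)
      next
        case 3
        have "\<forall>i. k\<le>i \<and> i<n \<longrightarrow> w i = 0" using z 3
          by (metis Suc_leI le_neq_implies_less)
        then show ?thesis unfolding sum using v[OF wt] 3 by (simp add: L_def)
      qed
    qed
  qed
  from this[of n] show ?thesis by auto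
qed



definition ax :: "nat \<Rightarrow> nat \<Rightarrow> real \<Rightarrow> nat \<Rightarrow> real" where
  "ax n k s = (\<lambda>i\<in>{..<n}. if i = k then s else 0)"

definition convex_n :: "nat \<Rightarrow> (nat \<Rightarrow> real) set \<Rightarrow> bool" where
  "convex_n n C \<longleftrightarrow> (\<forall>a\<in>C. \<forall>b\<in>C. \<forall>l. 0<l \<and> l<1 \<longrightarrow> vcomb n l a (1-l) b \<in> C)"

definition Ax :: "nat \<Rightarrow> (nat \<Rightarrow> real) set \<Rightarrow> bool" where
  "Ax n C \<longleftrightarrow> (\<forall>k<n. (\<exists>s>0. ax n k s \<in> C) \<and> (\<exists>s>0. ax n k (-s) \<in> C))"

lemma ax_in_Rn[simp]: "ax n k s \<in> Rn n" by (simp add: ax_def Rn_def)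
lemma vcomb_in_Rn[simp]: "vcomb n a x b y \<in> Rn n" by (simp add: vcomb_def Rn_def)
lemma vzero_in_Rn[simp]: "vzero n \<in> Rn n" by (simp add: vzero_def Rn_def)
lemma vscale_in_Rn[simp]: "vscale n r x \<in> Rn n" by (simp add: vscale_def Rn_def)

lemma Rn_eqI: "x \<in> Rn n \<Longrightarrow> y \<in> Rn n \<Longrightarrow> (\<And>i. i < n \<Longrightarrow> x i = y i) \<Longrightarrow> x = y"
  unfolding Rn_def by (rule PiE_ext) auto

lemma restrict_Rn: "restrict z {..<n} \<in> Rn n" by (simp add: Rn_def)

lemma dich_a_helper:
  assumes conv: "convex_n (Suc n) C" and CR: "C \<subseteq> Rn (Suc n)" and kn: "k < n"
    and z: "z \<in> C" "restrict z {..<n} = ax n k s"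
    and p: "s1 > 0" "ax (Suc n) n s1 \<in> C" and q: "s2 > 0" "ax (Suc n) n (-s2) \<in> C"
  shows "\<exists>\<alpha>>0. ax (Suc n) k (\<alpha> * s) \<in> C"
proof -
  have zR: "z \<in> Rn (Suc n)" using z CR by auto
  have zi: "z i = (if i = k then s else 0)" if "i < n" for i
  proof -
    have "restrict z {..<n} i = ax n k s i" using z by simp
    then show ?thesis using that by (simp add: ax_def)
  qed
  consider "z n = 0" | "z n > 0" | "z n < 0" by linarith
  then show ?thesis
  proof cases
    case 1
    have "z = ax (Suc n) k (1 * s)"
      by (rule Rn_eqI[OF zR ax_in_Rn]) (auto simp: ax_def zi 1 less_Suc_eq kn)
    then show ?thesis using z(1) by (intro exI[of _ 1]) auto
  next
    case 2
    define b where "b = z n"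
    define \<alpha> where "\<alpha> = s2 / (b + s2)"
    have b: "b > 0" using 2 b_def by simp
    have al: "0 < \<alpha>" "\<alpha> < 1" using b q by (auto simp: \<alpha>_def field_simps)
    have "vcomb (Suc n) \<alpha> z (1-\<alpha>) (ax (Suc n) n (-s2)) \<in> C"
      using conv z(1) q(2) al unfolding convex_n_def by blast
    moreover have "vcomb (Suc n) \<alpha> z (1-\<alpha>) (ax (Suc n) n (-s2)) = ax (Suc n) k (\<alpha> * s)"
    proof (rule Rn_eqI)
      fix i assume i: "i < Suc n"
      have "\<alpha> * b + (1 - \<alpha>) * (-s2) = 0" using b q by (simp add: \<alpha>_def field_simps)
      then show "vcomb (Suc n) \<alpha> z (1-\<alpha>) (ax (Suc n) n (-s2)) i = ax (Suc n) k (\<alpha> * s) i"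
        using i kn by (auto simp: vcomb_def ax_def zi b_def less_Suc_eq)
    qed auto
    ultimately show ?thesis using al by auto
  next
    case 3
    define b where "b = - z n"
    define \<alpha> where "\<alpha> = s1 / (b + s1)"
    have b: "b > 0" using 3 b_def by simp
    have al: "0 < \<alpha>" "\<alpha> < 1" using b p by (auto simp: \<alpha>_def field_simps)
    have "vcomb (Suc n) \<alpha> z (1-\<alpha>) (ax (Suc n) n s1) \<in> C"
      using conv z(1) p(2) al unfolding convex_n_def by blast
    moreover have "vcomb (Suc n) \<alpha> z (1-\<alpha>) (ax (Suc n) n s1) = ax (Suc n) k (\<alpha> * s)"
    proof (rule Rn_eqI)
      fix i assume i: "i < Suc n"
      have "\<alpha> * (-b) + (1 - \<alpha>) * s1 = 0" using b p by (simp add: \<alpha>_def field_simps)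
      then show "vcomb (Suc n) \<alpha> z (1-\<alpha>) (ax (Suc n) n s1) i = ax (Suc n) k (\<alpha> * s) i"
        using i kn by (auto simp: vcomb_def ax_def zi b_def less_Suc_eq)
    qed auto
    ultimately show ?thesis using al by auto
  qed
qed

lemma dich_b:
  assumes conv: "convex_n (Suc n) C" and CR: "C \<subseteq> Rn (Suc n)"
    and AxC': "Ax n ((\<lambda>z. restrict z {..<n}) ` C)"
    and sig: "\<sigma> = 1 \<or> \<sigma> = -1" and no: "\<And>s. s > 0 \<Longrightarrow> ax (Suc n) n (\<sigma> * s) \<notin> C"
  shows "\<exists>v. (\<exists>i<Suc n. v i \<noteq> 0) \<and> (\<forall>z\<in>C. 0 \<le> (\<Sum>i<Suc n. v i * z i))"
proof -
  define E where "E = {(restrict z {..<n}, \<sigma> * z n) | z. z \<in> C}"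
  have "\<exists>v. \<forall>w t. (w,t)\<in>E \<longrightarrow> t \<le> (\<Sum>i<n. v i * w i)"
  proof (rule HB_supergradient)
    show "w \<in> Rn n" if "(w,t)\<in>E" for w t using that by (auto simp: E_def restrict_Rn)
  next
    fix a t b s and l :: real
    assume a: "(a,t)\<in>E" and b: "(b,s)\<in>E" and l: "0<l" "l<1"
    obtain za where za: "za \<in> C" "a = restrict za {..<n}" "t = \<sigma> * za n" using a by (auto simp: E_def)
    obtain zb where zb: "zb \<in> C" "b = restrict zb {..<n}" "s = \<sigma> * zb n" using b by (auto simp: E_def)
    have m: "vcomb (Suc n) l za (1-l) zb \<in> C" using conv za zb l unfolding convex_n_def by blast
    have "vcomb n l a (1-l) b = restrict (vcomb (Suc n) l za (1-l) zb) {..<n}"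
      by (auto simp: za zb vcomb_def fun_eq_iff)
    moreover have "l*t + (1-l) * s = \<sigma> * (vcomb (Suc n) l za (1-l) zb) n"
      by (simp add: za zb vcomb_def algebra_simps)
    ultimately show "(vcomb n l a (1-l) b, l*t + (1-l) * s) \<in> E"
      using m unfolding E_def by blast
  next
    fix w t assume wt: "(w,t)\<in>E" and w0: "\<forall>i<n. w i = 0"
    obtain z where z: "z \<in> C" "w = restrict z {..<n}" "t = \<sigma> * z n" using wt by (auto simp: E_def)
    have zR: "z \<in> Rn (Suc n)" using z CR by auto
    show "t \<le> 0"
    proof (rule ccontr)
      assume "\<not> t \<le> 0"
      then have "t > 0" by simp
      have "z = ax (Suc n) n (\<sigma> * t)"
      proof (rule Rn_eqI[OF zR])
        fix i assume "i < Suc n"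
        moreover have "z i = 0" if "i < n" using w0 z(2) that by (metis lessThan_iff restrict_apply')
        moreover have "\<sigma> * t = z n" using sig z(3) by auto
        ultimately show "z i = ax (Suc n) n (\<sigma> * t) i" by (auto simp: ax_def less_Suc_eq)
      qed auto
      then show False using no[OF \<open>t>0\<close>] z(1) by simp
    qed
  next
    fix k assume k: "k < n"
    obtain s where s: "s > 0" "ax n k s \<in> (\<lambda>z. restrict z {..<n}) ` C" using AxC' k unfolding Ax_def by blast
    then obtain z where z: "z \<in> C" "ax n k s = restrict z {..<n}" by auto
    have zi: "z i = ax n k s i" if "i<n" for i using z(2) that by (metis lessThan_iff restrict_apply')
    show "\<exists>a t. (a,t)\<in>E \<and> a k > 0 \<and> (\<forall>i. k<i \<and> i<n \<longrightarrow> a i = 0)"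
      apply (rule exI[of _ "restrict z {..<n}"], rule exI[of _ "\<sigma> * z n"])
      using z(1) s k zi unfolding E_def by (auto simp: ax_def)
  next
    fix k assume k: "k < n"
    obtain s where s: "s > 0" "ax n k (-s) \<in> (\<lambda>z. restrict z {..<n}) ` C" using AxC' k unfolding Ax_def by blast
    then obtain z where z: "z \<in> C" "ax n k (-s) = restrict z {..<n}" by auto
    have zi: "z i = ax n k (-s) i" if "i<n" for i using z(2) that by (metis lessThan_iff restrict_apply')
    show "\<exists>a t. (a,t)\<in>E \<and> a k < 0 \<and> (\<forall>i. k<i \<and> i<n \<longrightarrow> a i = 0)"
      apply (rule exI[of _ "restrict z {..<n}"], rule exI[of _ "\<sigma> * z n"])
      using z(1) s k zi unfolding E_def by (auto simp: ax_def)
  qed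
  then obtain v' where v': "\<And>w t. (w,t)\<in>E \<Longrightarrow> t \<le> (\<Sum>i<n. v' i * w i)" by blast
  define v where "v = v'(n := - \<sigma>)"
  show ?thesis
  proof (rule exI[of _ v], intro conjI ballI)
    show "\<exists>i<Suc n. v i \<noteq> 0" using sig by (intro exI[of _ n]) (auto simp: v_def)
  next
    fix z assume z: "z \<in> C"
    have "(restrict z {..<n}, \<sigma> * z n) \<in> E" using z by (auto simp: E_def)
    from v'[OF this] have "\<sigma> * z n \<le> (\<Sum>i<n. v' i * z i)" by simp
    moreover have "(\<Sum>i<Suc n. v i * z i) = (\<Sum>i<n. v' i * z i) - \<sigma> * z n"
      by (simp add: v_def)
    ultimately show "0 \<le> (\<Sum>i<Suc n. v i * z i)" by simp
  qed
qed



lemma dichotomy: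
  "C \<subseteq> Rn n \<Longrightarrow> convex_n n C \<Longrightarrow> vzero n \<in> C \<Longrightarrow>
   (\<exists>v. (\<exists>i<n. v i \<noteq> 0) \<and> (\<forall>z\<in>C. 0 \<le> (\<Sum>i<n. v i * z i))) \<or> Ax n C"
proof (induction n arbitrary: C)
  case 0
  then show ?case by (simp add: Ax_def)
next
  case (Suc n)
  define C' where "C' = (\<lambda>z. restrict z {..<n}) ` C"
  have C'R: "C' \<subseteq> Rn n" unfolding C'_def using restrict_Rn by blast
  have C'c: "convex_n n C'"
    unfolding convex_n_def
  proof (intro ballI allI impI)
    fix a b and l :: real assume a: "a \<in> C'" and b: "b \<in> C'" and l: "0 < l \<and> l < 1"
    obtain za where za: "za \<in> C" "a = restrict za {..<n}" using a C'_def by auto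
    obtain zb where zb: "zb \<in> C" "b = restrict zb {..<n}" using b C'_def by auto
    have "vcomb (Suc n) l za (1-l) zb \<in> C" using Suc.prems(2) za zb l unfolding convex_n_def by blast
    moreover have "vcomb n l a (1-l) b = restrict (vcomb (Suc n) l za (1-l) zb) {..<n}"
      by (auto simp: za zb vcomb_def fun_eq_iff)
    ultimately show "vcomb n l a (1-l) b \<in> C'" unfolding C'_def by blast
  qed
  have "vzero n = restrict (vzero (Suc n)) {..<n}" by (auto simp: vzero_def fun_eq_iff)
  then have C'0: "vzero n \<in> C'" unfolding C'_def using Suc.prems(3) by blast
  from Suc.IH[OF C'R C'c C'0] show ?case
  proof
    assume "\<exists>v. (\<exists>i<n. v i \<noteq> 0) \<and> (\<forall>z\<in>C'. 0 \<le> (\<Sum>i<n. v i * z i))"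
    then obtain v' where v': "\<exists>i<n. v' i \<noteq> 0" "\<And>z. z\<in>C' \<Longrightarrow> 0 \<le> (\<Sum>i<n. v' i * z i)" by blast
    define v where "v = v'(n := 0)"
    have "\<exists>i<Suc n. v i \<noteq> 0" using v'(1) by (auto simp: v_def)
    moreover have "0 \<le> (\<Sum>i<Suc n. v i * z i)" if z: "z \<in> C" for z
    proof -
      have "restrict z {..<n} \<in> C'" using z C'_def by blast
      from v'(2)[OF this] have "0 \<le> (\<Sum>i<n. v' i * restrict z {..<n} i)" .
      also have "(\<Sum>i<n. v' i * restrict z {..<n} i) = (\<Sum>i<n. v' i * z i)" by (intro sum.cong) auto
      also have "\<dots> = (\<Sum>i<Suc n. v i * z i)" by (simp add: v_def)
      finally show ?thesis .
    qed
    ultimately show ?thesis by blast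
  next
    assume AxC': "Ax n C'"
    show ?thesis
    proof (cases "(\<exists>s>0. ax (Suc n) n s \<in> C) \<and> (\<exists>s>0. ax (Suc n) n (-s) \<in> C)")
      case True
      then obtain s1 s2 where p: "s1 > 0" "ax (Suc n) n s1 \<in> C" and q: "s2 > 0" "ax (Suc n) n (-s2) \<in> C"
        by blast
      have "Ax (Suc n) C"
        unfolding Ax_def
      proof (intro allI impI)
        fix k assume k: "k < Suc n"
        show "(\<exists>s>0. ax (Suc n) k s \<in> C) \<and> (\<exists>s>0. ax (Suc n) k (-s) \<in> C)"
        proof (cases "k = n")
          case True then show ?thesis using p q by blast
        next
          case False
          then have kn: "k < n" using k by simp
          obtain s where s: "s > 0" "ax n k s \<in> C'" using AxC' kn unfolding Ax_def by blast
          then obtain z where z: "z \<in> C" "restrict z {..<n} = ax n k s" unfolding C'_def by auto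
          obtain \<alpha> where \<alpha>: "\<alpha> > 0" "ax (Suc n) k (\<alpha> * s) \<in> C"
            using dich_a_helper[OF Suc.prems(2,1) kn z p q] by blast
          obtain s' where s': "s' > 0" "ax n k (-s') \<in> C'" using AxC' kn unfolding Ax_def by blast
          then obtain z' where z': "z' \<in> C" "restrict z' {..<n} = ax n k (-s')" unfolding C'_def by auto
          obtain \<beta> where \<beta>: "\<beta> > 0" "ax (Suc n) k (\<beta> * (-s')) \<in> C"
            using dich_a_helper[OF Suc.prems(2,1) kn z' p q] by blast
          have "\<alpha> * s > 0" "\<beta> * s' > 0" using \<alpha> s \<beta> s' by auto
          moreover have "ax (Suc n) k (- (\<beta> * s')) \<in> C" using \<beta> by simp
          ultimately show ?thesis using \<alpha> by blast
        qed
      qed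
      then show ?thesis by blast
    next
      case False
      then obtain \<sigma> where sig: "\<sigma> = 1 \<or> \<sigma> = -1" and no: "\<And>s. s > 0 \<Longrightarrow> ax (Suc n) n (\<sigma> * s) \<notin> C"
        by (metis mult_1 mult_minus1)
      from dich_b[OF Suc.prems(2,1) AxC'[unfolded C'_def] sig no] show ?thesis by blast
    qed
  qed
qed



lemma space_lebn[simp]: "space (lebn n) = Rn n"
  by (simp add: lebn_def Rn_def space_PiM)

lemma sets_lebn_Rn: "Rn n \<in> sets (lebn n)"
  by (metis sets.top space_lebn)

lemma basics:
  assumes lcm: "log_concave_measure n M" and cen: "centered n M" and den: "is_lc_density n M f"
  shows "f \<in> borel_measurable (lebn n)" "\<And>z. z \<in> Rn n \<Longrightarrow> 0 \<le> f z"
    "(\<integral>\<^sup>+z. ennreal (f z) \<partial>lebn n) = 1" "integrable (lebn n) f" "integral\<^sup>L (lebn n) f = 1"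
    "\<And>i. i < n \<Longrightarrow> integrable (lebn n) (\<lambda>z. f z * z i)"
    "\<And>i. i < n \<Longrightarrow> (\<integral>z. f z * z i \<partial>lebn n) = 0"
    "prob_space M" "M = density (lebn n) (\<lambda>x. ennreal (f x))"
proof -
  show fm: "f \<in> borel_measurable (lebn n)" using den by (simp add: is_lc_density_def)
  show fnn: "\<And>z. z \<in> Rn n \<Longrightarrow> 0 \<le> f z" using den by (simp add: is_lc_density_def log_concave_fun_def)
  show Md: "M = density (lebn n) (\<lambda>x. ennreal (f x))" using den by (simp add: is_lc_density_def)
  show P: "prob_space M" using lcm by (simp add: log_concave_measure_def)
  have "emeasure M (space M) = 1" using P by (simp add: prob_space.emeasure_space_1)
  then have "emeasure (density (lebn n) (\<lambda>x. ennreal (f x))) (Rn n) = 1" using Md by simp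
  then have "(\<integral>\<^sup>+z. ennreal (f z) * indicator (Rn n) z \<partial>lebn n) = 1"
    using fm by (simp add: emeasure_density sets_lebn_Rn)
  moreover have "(\<integral>\<^sup>+z. ennreal (f z) * indicator (Rn n) z \<partial>lebn n) = (\<integral>\<^sup>+z. ennreal (f z) \<partial>lebn n)"
    by (intro nn_integral_cong) simp
  ultimately show nn1: "(\<integral>\<^sup>+z. ennreal (f z) \<partial>lebn n) = 1" by simp
  have ae: "AE x in lebn n. 0 \<le> f x" using fnn by (intro AE_I2) simp
  show "integrable (lebn n) f" using fm ae nn1 by (intro integrableI_nonneg) auto
  show "integral\<^sup>L (lebn n) f = 1" using fm ae nn1 by (simp add: integral_eq_nn_integral)
  fix i assume i: "i < n"
  have cm: "(\<lambda>z::nat\<Rightarrow>real. z i) \<in> borel_measurable (lebn n)"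
  proof -
    have "i \<in> {..<n}" using i by simp
    then show ?thesis unfolding lebn_def by measurable
  qed
  have "integrable M (\<lambda>x. x i)" "(\<integral>x. x i \<partial>M) = 0" using cen i by (auto simp: centered_def)
  then show "integrable (lebn n) (\<lambda>z. f z * z i)" "(\<integral>z. f z * z i \<partial>lebn n) = 0"
    unfolding Md using integrable_density[OF cm fm ae] integral_density[OF cm fm ae] by auto
qed



lemma supergrad:
  assumes lcm: "log_concave_measure n M" and cen: "centered n M" and den: "is_lc_density n M f"
    and f0: "f (vzero n) > 0"
  shows "\<exists>v. \<forall>z. z \<in> Rn n \<and> f z > 0 \<longrightarrow> ln (f z) - ln (f (vzero n)) \<le> (\<Sum>i<n. v i * z i)"
proof -
  note B = basics[OF lcm cen den]
  have fm[measurable]: "f \<in> borel_measurable (lebn n)" by (rule B(1))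
  have lc: "\<And>x y l. x\<in>Rn n \<Longrightarrow> y\<in>Rn n \<Longrightarrow> 0<l \<Longrightarrow> l<1 \<Longrightarrow> f (vcomb n l x (1-l) y) \<ge> f x powr l * f y powr (1-l)"
    using den by (simp add: is_lc_density_def log_concave_fun_def)
  define S where "S = {z \<in> Rn n. f z > 0}"
  have Sc: "convex_n n S"
    unfolding convex_n_def
  proof (intro ballI allI impI)
    fix a b and l :: real assume a: "a \<in> S" and b: "b \<in> S" and l: "0 < l \<and> l < 1"
    have "0 < f a powr l * f b powr (1-l)" using a b by (simp add: S_def)
    also have "\<dots> \<le> f (vcomb n l a (1-l) b)" using lc a b l by (simp add: S_def)
    finally show "vcomb n l a (1-l) b \<in> S" by (simp add: S_def)
  qed
  have S0: "vzero n \<in> S" using f0 by (simp add: S_def)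
  have SR: "S \<subseteq> Rn n" by (auto simp: S_def)
  have notH: "\<not> (\<exists>v. (\<exists>i<n. v i \<noteq> 0) \<and> (\<forall>z\<in>S. 0 \<le> (\<Sum>i<n. v i * z i)))"
  proof
    assume "\<exists>v. (\<exists>i<n. v i \<noteq> 0) \<and> (\<forall>z\<in>S. 0 \<le> (\<Sum>i<n. v i * z i))"
    then obtain v where v: "\<exists>i<n. v i \<noteq> 0" "\<And>z. z\<in>S \<Longrightarrow> 0 \<le> (\<Sum>i<n. v i * z i)" by blast
    define \<phi> where "\<phi> = (\<lambda>x::nat\<Rightarrow>real. \<Sum>i<n. v i * x i)"
    interpret P: prob_space M by (rule B(8))
    have Md: "M = density (lebn n) (\<lambda>x. ennreal (f x))" by (rule B(9))
    have ci: "integrable M (\<lambda>x. x i)" "(\<integral>x. x i \<partial>M) = 0" if "i < n" for i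
      using cen that by (auto simp: centered_def)
    have phii: "integrable M \<phi>" unfolding \<phi>_def
      using Bochner_Integration.integrable_sum[where I="{..<n}" and M=M and f="\<lambda>i x. v i * x i"] ci by auto
    have phi0: "(\<integral>x. \<phi> x \<partial>M) = 0" unfolding \<phi>_def using ci
      by (subst Bochner_Integration.integral_sum) (auto intro: integrable_mult_right)
    have spM: "space M = Rn n" using Md by simp
    have aeS: "AE x in M. x \<in> S"
      unfolding Md by (subst AE_density) (auto simp: S_def intro!: AE_I2)
    have "AE x in M. 0 \<le> \<phi> x" using aeS by eventually_elim (simp add: \<phi>_def v(2))
    then have "AE x in M. \<phi> x = 0" using integral_nonneg_eq_0_iff_AE[OF phii] phi0 by simp
    define H where "H = {x \<in> Rn n. \<phi> x = 0}"
    have phim: "\<phi> \<in> borel_measurable (lebn n)" unfolding \<phi>_def lebn_def by measurable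
    have Hs: "H \<in> sets M"
    proof -
      have "H = {x \<in> space (lebn n). \<phi> x = 0}" by (simp add: H_def)
      also have "\<dots> \<in> sets (lebn n)" using phim by measurable
      finally show ?thesis using Md by simp
    qed
    have "AE x in M. x \<in> H" using \<open>AE x in M. \<phi> x = 0\<close>
      by (rule AE_mp) (intro AE_I2, auto simp: H_def spM)
    then have "measure M H = 1" using P.AE_in_set_eq_1[OF Hs] by simp
    moreover have "hyperplane_n n H" unfolding hyperplane_n_def H_def \<phi>_def using v(1) by blast
    then have "measure M H < 1" using lcm by (simp add: log_concave_measure_def)
    ultimately show False by simp
  qed
  then have AxS: "Ax n S" using dichotomy[OF SR Sc S0] by blast
  define E where "E = {(z, t) | z t. z \<in> S \<and> t \<le> ln (f z) - ln (f (vzero n))}"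
  have "\<exists>v. \<forall>w t. (w,t)\<in>E \<longrightarrow> t \<le> (\<Sum>i<n. v i * w i)"
  proof (rule HB_supergradient)
    show "w \<in> Rn n" if "(w,t)\<in>E" for w t using that by (auto simp: E_def S_def)
  next
    fix a t b s and l :: real
    assume a: "(a,t)\<in>E" and b: "(b,s)\<in>E" and l: "0<l" "l<1"
    have aS: "a \<in> S" and ta: "t \<le> ln (f a) - ln (f (vzero n))" using a by (auto simp: E_def)
    have bS: "b \<in> S" and tb: "s \<le> ln (f b) - ln (f (vzero n))" using b by (auto simp: E_def)
    have mS: "vcomb n l a (1-l) b \<in> S" using Sc aS bS l unfolding convex_n_def by blast
    have pa: "f a > 0" "f b > 0" using aS bS by (auto simp: S_def)
    have "ln (f a powr l * f b powr (1-l)) \<le> ln (f (vcomb n l a (1-l) b))"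
      using lc[of a b l] aS bS l pa mS by (subst ln_le_cancel_iff) (auto simp: S_def)
    then have "l * ln (f a) + (1-l) * ln (f b) \<le> ln (f (vcomb n l a (1-l) b))"
      using pa by (simp add: ln_mult)
    moreover have "l*t + (1-l) * s \<le> l * (ln (f a) - ln (f (vzero n))) + (1-l) * (ln (f b) - ln (f (vzero n)))"
      using ta tb l by (intro add_mono mult_left_mono) auto
    ultimately have "l*t + (1-l) * s \<le> ln (f (vcomb n l a (1-l) b)) - ln (f (vzero n))"
      by (simp add: algebra_simps)
    then show "(vcomb n l a (1-l) b, l*t + (1-l) * s) \<in> E" using mS by (simp add: E_def)
  next
    fix w t assume wt: "(w,t)\<in>E" and w0: "\<forall>i<n. w i = 0"
    have "w \<in> Rn n" and t: "t \<le> ln (f w) - ln (f (vzero n))" using wt by (auto simp: E_def S_def)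
    moreover have "w = vzero n" by (rule Rn_eqI[OF \<open>w \<in> Rn n\<close> vzero_in_Rn]) (simp add: w0 vzero_def)
    ultimately show "t \<le> 0" by simp
  next
    fix k assume k: "k < n"
    obtain s where s: "s > 0" "ax n k s \<in> S" using AxS k unfolding Ax_def by blast
    show "\<exists>a t. (a,t)\<in>E \<and> a k > 0 \<and> (\<forall>i. k<i \<and> i<n \<longrightarrow> a i = 0)"
      using s k by (intro exI[of _ "ax n k s"] exI[of _ "ln (f (ax n k s)) - ln (f (vzero n))"]) (auto simp: E_def ax_def)
  next
    fix k assume k: "k < n"
    obtain s where s: "s > 0" "ax n k (-s) \<in> S" using AxS k unfolding Ax_def by blast
    show "\<exists>a t. (a,t)\<in>E \<and> a k < 0 \<and> (\<forall>i. k<i \<and> i<n \<longrightarrow> a i = 0)"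
      using s k by (intro exI[of _ "ax n k (-s)"] exI[of _ "ln (f (ax n k (-s))) - ln (f (vzero n))"]) (auto simp: E_def ax_def)
  qed
  then obtain v where v: "\<And>w t. (w,t)\<in>E \<Longrightarrow> t \<le> (\<Sum>i<n. v i * w i)" by blast
  show ?thesis
  proof (rule exI[of _ v], intro allI impI)
    fix z assume "z \<in> Rn n \<and> f z > 0"
    then have "(z, ln (f z) - ln (f (vzero n))) \<in> E" by (simp add: E_def S_def)
    then show "ln (f z) - ln (f (vzero n)) \<le> (\<Sum>i<n. v i * z i)" by (rule v)
  qed
qed



lemma ptw:
  fixes fz fy f0 e L :: real
  assumes fz: "fz \<ge> 0" and fy: "fy > 0" and f0: "f0 > 0" and e: "0 < e" "e < 1"
    and L: "fz > 0 \<Longrightarrow> ln fz - ln f0 \<le> L"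
  shows "fz * ln (fy / f0) \<le> (fz powr (1-e) * fy powr e - fz) / e + L * fz"
proof (cases "fz = 0")
  case True then show ?thesis by simp
next
  case False
  then have fzp: "fz > 0" using fz by simp
  define \<rho> where "\<rho> = fy / fz"
  have rp: "\<rho> > 0" using fy fzp by (simp add: \<rho>_def)
  have "ln (\<rho> powr e) \<le> \<rho> powr e - 1" using rp by (intro ln_le_minus_one) simp
  then have "e * ln \<rho> \<le> \<rho> powr e - 1" using rp by simp
  then have lr: "ln \<rho> \<le> (\<rho> powr e - 1) / e" using e by (simp add: field_simps)
  have "ln (fy / f0) = ln \<rho> + (ln fz - ln f0)" using fy fzp f0 by (simp add: \<rho>_def ln_div)
  also have "\<dots> \<le> (\<rho> powr e - 1) / e + L" using lr L[OF fzp] by simp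
  finally have "fz * ln (fy / f0) \<le> fz * ((\<rho> powr e - 1) / e + L)"
    using fzp by (simp add: mult_left_mono)
  also have "fz * ((\<rho> powr e - 1) / e + L) = (fz * \<rho> powr e - fz) / e + L * fz"
    using e by (simp add: field_simps)
  also have "fz * \<rho> powr e = fz powr (1-e) * fy powr e"
    using fzp fy by (simp add: \<rho>_def powr_divide powr_diff)
  finally show ?thesis .
qed



lemma frad:
  assumes n: "n > 0" and lcm: "log_concave_measure n M" and cen: "centered n M" and den: "is_lc_density n M f"
    and f0: "f (vzero n) > 0" and y: "y \<in> Rn n"
  shows "f y \<le> exp (4 * real n) * f (vzero n)"
proof -
  note B = basics[OF lcm cen den]
  have fm[measurable]: "f \<in> borel_measurable (lebn n)" by (rule B(1))
  have fnn: "\<And>z. z \<in> Rn n \<Longrightarrow> 0 \<le> f z" by (rule B(2))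
  have lc: "\<And>x y l. x\<in>Rn n \<Longrightarrow> y\<in>Rn n \<Longrightarrow> 0<l \<Longrightarrow> l<1 \<Longrightarrow> f (vcomb n l x (1-l) y) \<ge> f x powr l * f y powr (1-l)"
    using den by (simp add: is_lc_density_def log_concave_fun_def)
  show ?thesis
  proof (cases "f y = 0")
    case True then show ?thesis using f0 by simp
  next
    case False
    then have fy: "f y > 0" using fnn[OF y] by simp
    obtain v where v: "\<And>z. z \<in> Rn n \<Longrightarrow> f z > 0 \<Longrightarrow> ln (f z) - ln (f (vzero n)) \<le> (\<Sum>i<n. v i * z i)"
      using supergrad[OF lcm cen den f0] by blast
    define lam where "lam = real n / (real n + 1)"
    define e where "e = 1 - lam"
    have e_eq: "e = 1 / (real n + 1)" by (simp add: e_def lam_def field_simps)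
    have lam: "0 < lam" "lam < 1" using n by (auto simp: lam_def)
    have e: "0 < e" "e < 1" using lam by (auto simp: e_def)
    define T where "T = (\<lambda>z. vcomb n lam z (1-lam) y)"
    have Tm[measurable]: "T \<in> measurable (lebn n) (lebn n)"
      unfolding T_def vcomb_def lebn_def by measurable
    have TR: "T z \<in> Rn n" for z by (simp add: T_def)
    have fTm[measurable]: "(\<lambda>z. f (T z)) \<in> borel_measurable (lebn n)" by measurable
    have "(\<integral>\<^sup>+z. ennreal (f (T z)) \<partial>lebn n) = ennreal (1 / lam^n) * (\<integral>\<^sup>+z. ennreal (f z) \<partial>lebn n)"
      using lebn_affine[OF lam(1), of "\<lambda>w. ennreal (f w)" n "\<lambda>i. (1-lam) * y i"]
      by (simp add: T_def vcomb_def)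
    then have nnT: "(\<integral>\<^sup>+z. ennreal (f (T z)) \<partial>lebn n) = ennreal (1 / lam^n)" using B(3) by simp
    have aeT: "AE z in lebn n. 0 \<le> f (T z)" using fnn TR by (intro AE_I2) auto
    have intT: "integrable (lebn n) (\<lambda>z. f (T z))" using nnT aeT by (intro integrableI_nonneg) auto
    have IT: "(\<integral>z. f (T z) \<partial>lebn n) = 1 / lam^n"
      using nnT aeT lam by (simp add: integral_eq_nn_integral)
    define g where "g = (\<lambda>z. f z powr (1-e) * f y powr e)"
    have gm[measurable]: "g \<in> borel_measurable (lebn n)" unfolding g_def by measurable
    have gle: "g z \<le> f (T z)" if "z \<in> Rn n" for z
      using lc[OF that y lam] by (simp add: g_def T_def e_def)
    have gnn: "0 \<le> g z" for z by (simp add: g_def)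
    have intg: "integrable (lebn n) g"
      by (rule Bochner_Integration.integrable_bound[OF intT gm]) (use gle gnn fnn TR in \<open>auto intro!: AE_I2\<close>)
    have Ig: "(\<integral>z. g z \<partial>lebn n) \<le> 1 / lam^n"
      using Bochner_Integration.integral_mono[OF intg intT gle] IT by simp
    define R where "R = (\<lambda>z. (g z - f z) / e + (\<Sum>i<n. v i * (f z * z i)))"
    have intR: "integrable (lebn n) R"
      unfolding R_def using intg B(4) B(6)
      by (intro Bochner_Integration.integrable_add integrable_divide Bochner_Integration.integrable_diff
            Bochner_Integration.integrable_sum integrable_mult_right) auto
    have i1: "integrable (lebn n) (\<lambda>z. (g z - f z) / e)"
      using intg B(4) by (intro integrable_divide Bochner_Integration.integrable_diff) auto
    have i2: "integrable (lebn n) (\<lambda>z. v i * (f z * z i))" if "i < n" for i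
      using B(6)[OF that] by (intro integrable_mult_right)
    have I1: "(\<integral>z. (g z - f z) / e \<partial>lebn n) = ((\<integral>z. g z \<partial>lebn n) - 1) / e"
      using intg B(4) B(5) by (simp add: Bochner_Integration.integral_diff)
    have I2: "(\<integral>z. (\<Sum>i<n. v i * (f z * z i)) \<partial>lebn n) = 0"
    proof -
      have "(\<integral>z. (\<Sum>i<n. v i * (f z * z i)) \<partial>lebn n) = (\<Sum>i<n. (\<integral>z. v i * (f z * z i) \<partial>lebn n))"
        using i2 by (intro Bochner_Integration.integral_sum) auto
      also have "\<dots> = 0" using B(7) by (intro sum.neutral) simp
      finally show ?thesis .
    qed
    have IR: "(\<integral>z. R z \<partial>lebn n) = ((\<integral>z. g z \<partial>lebn n) - 1) / e"
    proof -
      have "(\<integral>z. R z \<partial>lebn n) = (\<integral>z. (g z - f z) / e \<partial>lebn n) + (\<integral>z. (\<Sum>i<n. v i * (f z * z i)) \<partial>lebn n)"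
        unfolding R_def using i1 i2 by (intro Bochner_Integration.integral_add) auto
      then show ?thesis using I1 I2 by simp
    qed
    have intL: "integrable (lebn n) (\<lambda>z. f z * ln (f y / f (vzero n)))"
      using B(4) by simp
    have ptw': "f z * ln (f y / f (vzero n)) \<le> R z" if z: "z \<in> Rn n" for z
    proof -
      have "f z * ln (f y / f (vzero n)) \<le> (f z powr (1-e) * f y powr e - f z) / e + (\<Sum>i<n. v i * z i) * f z"
        by (rule ptw[OF fnn[OF z] fy f0 e]) (rule v[OF z])
      also have "\<dots> = R z" by (simp add: R_def g_def sum_distrib_left sum_distrib_right algebra_simps)
      finally show ?thesis .
    qed
    have "(\<integral>z. f z * ln (f y / f (vzero n)) \<partial>lebn n) \<le> (\<integral>z. R z \<partial>lebn n)"
      by (rule Bochner_Integration.integral_mono[OF intL intR]) (use ptw' in simp)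
    moreover have "(\<integral>z. f z * ln (f y / f (vzero n)) \<partial>lebn n) = ln (f y / f (vzero n))"
      using B(5) by simp
    ultimately have lnb: "ln (f y / f (vzero n)) \<le> (1 / lam^n - 1) / e"
      using IR Ig e by (smt (verit) divide_right_mono)
    have "1 / lam^n = (1 + 1 / real n) ^ n" using n by (simp add: lam_def field_simps power_divide)
    also have "\<dots> \<le> exp 1"
    proof -
      have "ln ((1 + 1 / real n) ^ n) = real n * ln (1 + 1 / real n)" by (simp add: ln_realpow)
      also have "\<dots> \<le> real n * (1 / real n)" by (intro mult_left_mono ln_add_one_self_le_self) auto
      also have "\<dots> = 1" using n by simp
      finally show ?thesis by (metis exp_le_cancel_iff exp_ln add_pos_pos of_nat_0_less_iff n
            zero_less_divide_1_iff zero_less_one zero_less_power)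
    qed
    also have "\<dots> \<le> 3" by (rule exp_le)
    finally have X3: "1 / lam^n \<le> 3" .
    have "(1 / lam^n - 1) / e \<le> 2 / e" using X3 e by (intro divide_right_mono) auto
    also have "2 / e = 2 * (real n + 1)" using e_eq by simp
    finally have "(1 / lam^n - 1) / e \<le> 2 * (real n + 1)" .
    also have "\<dots> \<le> 4 * real n" using n by simp
    finally have "ln (f y / f (vzero n)) \<le> 4 * real n" using lnb by simp
    then have "f y / f (vzero n) \<le> exp (4 * real n)" using fy f0
      by (metis divide_pos_pos exp_le_cancel_iff exp_ln)
    then show ?thesis using f0 by (simp add: field_simps)
  qed
qed



lemma gamma_int:
  fixes a :: real assumes a: "a > 0"
  shows "(\<integral>\<^sup>+r. ennreal (r^n * exp (-a*r)) * indicator {0..} r \<partial>lborel) = ennreal (fact n / a^(n+1))"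
proof -
  define F where "F = (\<lambda>r::real. ennreal (r^n * exp (-a*r)) * indicator {0..} r)"
  have Fm: "F \<in> borel_measurable borel" unfolding F_def by measurable
  have "(\<integral>\<^sup>+r. F r \<partial>lborel) = ennreal \<bar>1/a\<bar> * (\<integral>\<^sup>+u. F (0 + (1/a) * u) \<partial>lborel)"
    using nn_integral_real_affine[OF Fm, of "1/a" 0] a by simp
  also have "(\<integral>\<^sup>+u. F (0 + (1/a) * u) \<partial>lborel) = (\<integral>\<^sup>+u. ennreal (1/a^n) * (ennreal (u^n * exp (-u)) * indicator {0..} u) \<partial>lborel)"
  proof (intro nn_integral_cong)
    fix u :: real
    have "F (0 + (1/a) * u) = ennreal ((u/a)^n * exp (-u)) * indicator {0..} u"
      using a by (simp add: F_def indicator_def zero_le_divide_iff)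
    also have "\<dots> = ennreal (1/a^n) * (ennreal (u^n * exp (-u)) * indicator {0..} u)"
      using a by (cases "u \<ge> 0") (auto simp: ennreal_mult[symmetric] power_divide mult.assoc)
    finally show "F (0 + (1/a) * u) = ennreal (1/a^n) * (ennreal (u^n * exp (-u)) * indicator {0..} u)" .
  qed
  also have "\<dots> = ennreal (1/a^n) * ennreal (fact n)"
    by (subst nn_integral_cmult) (auto simp: nn_intergal_power_times_exp_Ici)
  finally show ?thesis using a
    by (simp add: F_def ennreal_mult'[symmetric] mult.assoc[symmetric] field_simps)
qed

lemma numeric:
  assumes n: "n > 0"
  shows "exp (9 * real n) * fact n / (5 * real n / exp (-9)) ^ (n+1) < 1 / (real n + 1)"
proof -
  have f1: "fact n \<le> (real n)^n" using fact_le_power[of n] by simp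
  have "(real n)^n \<le> (5 * real n)^n" by (intro power_mono) auto
  then have f2: "fact n \<le> (5 * real n)^n" using f1 by (rule order_trans[rotated])
  have "fact n * (real n + 1) \<le> (5 * real n)^n * (5 * real n)"
    using f2 n by (intro mult_mono) auto
  then have key: "fact n * (real n + 1) \<le> (5 * real n)^(n+1)" by (simp add: mult.commute)
  have "(5 * real n / exp (-9)) ^ (n+1) = (5 * real n)^(n+1) * exp (9 * real n) * exp 9"
    by (simp add: power_divide exp_minus field_simps exp_of_nat_mult[symmetric] exp_add[symmetric] algebra_simps)
  then have "exp (9 * real n) * fact n / (5 * real n / exp (-9)) ^ (n+1) = fact n / ((5 * real n)^(n+1) * exp 9)"
    by simp
  also have "\<dots> \<le> fact n / (fact n * (real n + 1) * exp 9)"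
    using key n by (intro divide_left_mono mult_right_mono) auto
  also have "\<dots> = 1 / ((real n + 1) * exp 9)" by simp
  also have "\<dots> < 1 / (real n + 1)"
    by (intro divide_strict_left_mono) auto
  finally show ?thesis .
qed



lemma ray_bound:
  assumes n: "n > 0" and lcm: "log_concave_measure n M" and cen: "centered n M" and den: "is_lc_density n M f"
    and f0: "f (vzero n) > 0" and x: "x \<in> Rn n" and t: "t \<ge> 5 * real n"
    and c0: "c0 > 0" and neg: "f (vscale n c0 x) < exp (-t) * f (vzero n)"
    and r: "r > 0"
  shows "f (vscale n r x) \<le> f (vzero n) * exp (9 * real n) * exp (- (5 * real n / c0) * r)"
proof -
  note B = basics[OF lcm cen den]
  have fnn: "\<And>z. z \<in> Rn n \<Longrightarrow> 0 \<le> f z" by (rule B(2))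
  have lc: "\<And>x y l. x\<in>Rn n \<Longrightarrow> y\<in>Rn n \<Longrightarrow> 0<l \<Longrightarrow> l<1 \<Longrightarrow> f (vcomb n l x (1-l) y) \<ge> f x powr l * f y powr (1-l)"
    using den by (simp add: is_lc_density_def log_concave_fun_def)
  define a where "a = 5 * real n / c0"
  have ea: "exp (9 * real n) * exp (- a * r) = exp (9 * real n - a * r)" by (simp add: exp_diff exp_minus field_simps)
  show ?thesis
  proof (cases "r \<le> c0")
    case True
    have "a * r \<le> 5 * real n" using True c0 r by (simp add: a_def field_simps mult_right_mono)
    then have "exp (4 * real n) \<le> exp (9 * real n) * exp (- a * r)" unfolding ea by simp
    moreover have "f (vscale n r x) \<le> exp (4 * real n) * f (vzero n)" by (rule frad[OF n lcm cen den f0]) simp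
    moreover note f0
    ultimately have "f (vscale n r x) \<le> (exp (9 * real n) * exp (- a * r)) * f (vzero n)"
      by (meson less_imp_le mult_right_mono order_trans)
    then show ?thesis by (simp add: a_def mult_ac)
  next
    case False
    then have rc: "r > c0" by simp
    define l where "l = c0 / r"
    have l: "0 < l" "l < 1" using rc c0 by (auto simp: l_def)
    have eq: "vcomb n l (vscale n r x) (1-l) (vzero n) = vscale n c0 x"
      by (rule Rn_eqI[OF vcomb_in_Rn vscale_in_Rn]) (use r in \<open>auto simp: vcomb_def vscale_def vzero_def l_def\<close>)
    have ineq: "f (vscale n r x) powr l * f (vzero n) powr (1-l) \<le> f (vscale n c0 x)"
      using lc[OF vscale_in_Rn[of n r x] vzero_in_Rn l] eq by simp
    show ?thesis
    proof (cases "f (vscale n r x) = 0")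
      case True then show ?thesis using f0 by simp
    next
      case False
      then have fr: "f (vscale n r x) > 0" using fnn[OF vscale_in_Rn] by (simp add: less_le)
      have pos: "0 < f (vscale n r x) powr l * f (vzero n) powr (1-l)" using fr f0 by simp
      have "ln (f (vscale n r x) powr l * f (vzero n) powr (1-l)) < ln (exp (-t) * f (vzero n))"
        using ineq neg pos by (subst ln_less_cancel_iff) auto
      then have "l * ln (f (vscale n r x)) + (1-l) * ln (f (vzero n)) < -t + ln (f (vzero n))"
        using fr f0 by (simp add: ln_mult)
      then have "l * (ln (f (vscale n r x)) - ln (f (vzero n))) < -t" by (simp add: algebra_simps)
      then have "ln (f (vscale n r x)) - ln (f (vzero n)) < -t / l" using l by (simp add: field_simps)
      also have "-t / l \<le> - a * r"
      proof -
        have "a * r \<le> t * r / c0" using t r c0 by (simp add: a_def divide_right_mono mult_right_mono)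
        then show ?thesis by (simp add: l_def field_simps)
      qed
      finally have "ln (f (vscale n r x)) < ln (f (vzero n)) + (- a * r)" by simp
      then have "f (vscale n r x) < exp (ln (f (vzero n)) + (- a * r))"
        using fr by (metis exp_less_cancel_iff exp_ln)
      also have "\<dots> = f (vzero n) * exp (- a * r)" using f0 by (simp only: exp_add exp_ln)
      also have "\<dots> \<le> f (vzero n) * exp (9 * real n) * exp (- a * r)"
        using f0 by (simp add: mult.assoc mult_left_mono)
      finally show ?thesis by (simp add: a_def)
    qed
  qed
qed



lemma main_core:
  assumes n: "n > 0" and lcm: "log_concave_measure n M" and cen: "centered n M" and den: "is_lc_density n M f"
    and t: "t \<ge> 5 * real n" and xK: "x \<in> Ks n f (real n + 1)"
  shows "vscale n (exp (-9)) x \<in> Rt n f t"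
proof -
  note B = basics[OF lcm cen den]
  have fnn: "\<And>z. z \<in> Rn n \<Longrightarrow> 0 \<le> f z" by (rule B(2))
  have x: "x \<in> Rn n" using xK by (simp add: Ks_def)
  have I: "ennreal (f (vzero n) / (real n + 1)) \<le>
      (\<integral>\<^sup>+ r. ennreal (indicator {0<..} r * r powr (real n + 1 - 1) * f (vscale n r x)) \<partial>lborel)"
    using xK by (simp add: Ks_def)
  define c0 :: real where "c0 = exp (-9)"
  have c0: "c0 > 0" by (simp add: c0_def)
  have "f (vscale n c0 x) \<ge> exp (-t) * f (vzero n)"
  proof (cases "f (vzero n) = 0")
    case True then show ?thesis using fnn[OF vscale_in_Rn] by simp
  next
    case False
    then have f0: "f (vzero n) > 0" using fnn[OF vzero_in_Rn] by (simp add: less_le)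
    show ?thesis
    proof (rule ccontr)
      assume "\<not> exp (-t) * f (vzero n) \<le> f (vscale n c0 x)"
      then have neg: "f (vscale n c0 x) < exp (-t) * f (vzero n)" by simp
      define a where "a = 5 * real n / c0"
      have a: "a > 0" using n c0 by (simp add: a_def)
      define K where "K = f (vzero n) * exp (9 * real n)"
      have K: "K > 0" using f0 by (simp add: K_def)
      have pt: "ennreal (indicator {0<..} r * r powr (real n + 1 - 1) * f (vscale n r x))
          \<le> ennreal K * (ennreal (r^n * exp (-a*r)) * indicator {0..} r)" for r :: real
      proof (cases "r > 0")
        case True
        have rb: "f (vscale n r x) \<le> K * exp (-a*r)"
          using ray_bound[OF n lcm cen den f0 x t c0 neg True] by (simp add: K_def a_def)
        have "indicator {0<..} r * r powr (real n + 1 - 1) * f (vscale n r x) = r^n * f (vscale n r x)"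
          using True by (simp add: powr_realpow)
        also have "\<dots> \<le> r^n * (K * exp (-a*r))" using rb True by (intro mult_left_mono) auto
        finally have "ennreal (indicator {0<..} r * r powr (real n + 1 - 1) * f (vscale n r x)) \<le> ennreal (K * (r^n * exp (-a*r)))"
          by (intro ennreal_leI) (simp add: mult_ac)
        also have "\<dots> = ennreal K * (ennreal (r^n * exp (-a*r)) * indicator {0..} r)"
          using True K by (simp add: ennreal_mult)
        finally show ?thesis .
      next
        case False
        then show ?thesis by simp
      qed
      have "(\<integral>\<^sup>+ r. ennreal (indicator {0<..} r * r powr (real n + 1 - 1) * f (vscale n r x)) \<partial>lborel)
          \<le> (\<integral>\<^sup>+ r. ennreal K * (ennreal (r^n * exp (-a*r)) * indicator {0..} r) \<partial>lborel)"
        by (intro nn_integral_mono pt)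
      also have "\<dots> = ennreal K * ennreal (fact n / a^(n+1))"
      proof -
        have "(\<integral>\<^sup>+ r. ennreal K * (ennreal (r^n * exp (-a*r)) * indicator {0..} r) \<partial>lborel)
            = ennreal K * (\<integral>\<^sup>+ r. ennreal (r^n * exp (-a*r)) * indicator {0..} r \<partial>lborel)"
          by (rule nn_integral_cmult) measurable
        then show ?thesis by (simp only: gamma_int[OF a])
      qed
      also have "\<dots> = ennreal (K * (fact n / a^(n+1)))" using K a by (subst ennreal_mult) auto
      finally have "ennreal (f (vzero n) / (real n + 1)) \<le> ennreal (K * (fact n / a^(n+1)))"
        using I by (rule order_trans[rotated])
      then have le: "f (vzero n) / (real n + 1) \<le> K * (fact n / a^(n+1))"
        using K a by (subst (asm) ennreal_le_iff) auto
      have "K * (fact n / a^(n+1)) = f (vzero n) * (exp (9 * real n) * fact n / (5 * real n / exp (-9)) ^ (n+1))"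
        by (simp add: K_def a_def c0_def)
      also have "\<dots> < f (vzero n) * (1 / (real n + 1))"
        using numeric[OF n] f0 by (intro mult_strict_left_mono) auto
      finally show False using le by simp
    qed
  qed
  then show ?thesis by (simp add: Rt_def c0_def)
qed

theorem lemma4p5:
  shows "\<exists>c0>0. \<forall>n M f t. 0 < n \<and> log_concave_measure n M \<and> centered n M \<and>
           is_lc_density n M f \<and> t \<ge> 5 * real n \<longrightarrow>
           vscale n c0 ` Ks n f (real n + 1) \<subseteq> Rt n f t"
proof (rule exI[of _ "exp (-9)"], intro conjI allI impI subsetI)
  show "(0::real) < exp (-9)" by simp
next
  fix n M f t y
  assume H: "0 < n \<and> log_concave_measure n M \<and> centered n M \<and> is_lc_density n M f \<and> t \<ge> 5 * real n"
    and y: "y \<in> vscale n (exp (-9)) ` Ks n f (real n + 1)"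
  then obtain x where "x \<in> Ks n f (real n + 1)" "y = vscale n (exp (-9)) x" by auto
  then show "y \<in> Rt n f t" using main_core H by blast
qed

end
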